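(* Let $\mathcal M$ be a local Moufang set with basis $(0,\infty)$. Then, as subsets of the little projective group, $U_0^\circ\,U_\infty\subseteq U_\infty\,H\,U_0^\circ$.
   Context: Group actions are right actions, written $xg$; conjugation is $g^h=h^{-1}gh$. For a set $X$ with an equivalence relation $\sim$, $\overline{x}$ denotes the class of $x$, $\overline X$ the set of classes, and $\mathrm{Sym}(X,\sim)$ the group of bijections $g$ of $X$ with $x\sim y\iff xg\sim yg$; each such $g$ induces a permutation $\overline g$ of $\overline X$, and for a subgroup $U\le \mathrm{Sym}(X,\sim)$, $\overline U$ is the induced group of permutations of $\overline X$. A local Moufang set consists of a set with equivalence relation $(X,\sim)$ with $|\overline X|>2$ and, for each $x\in X$, a subgroup (root group) $U_x\le\mathrm{Sym}(X,\sim)$ such that: (LM0) if $x\sim y$ then $\overline{U_x}=\overline{U_y}$; (LM1) $U_x$ fixes $x$ and acts sharply transitively on $X\setminus\overline x$; (LM1') $\overline{U_x}$ fixes $\overline x$ and acts sharply transitively on $\overline X\setminus\{\overline x\}$; (LM2) $U_x^g=U_{xg}$ for all $x\in X$ and all $g$ in the little projective group $G:=\langle U_x\mid x\in X\rangle$. A basis is a fixed pair $(0,\infty)$ with $0\not\sim\infty$. For $x\not\sim\infty$, $\alpha_x$ is the unique element of $U_\infty$ with $0\alpha_x=x$. A unit is $x\in X$ with $x\not\sim0$, $x\not\sim\infty$; for a unit $x$, $\mu_x$ is the unique element of $U_0\alpha_xU_0$ interchanging $0$ and $\infty$. The Hua subgroup is $H:=\langle\mu_x\mu_y\mid x,y\text{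 units}\rangle$. For $x\in X$, $U_x^\circ:=\{u\in U_x\mid \overline u=\mathrm{id}_{\overline X}\}$. *)

theory Defs
  imports Main
begin

text \<open>Permutations of the set X are functions 'a => 'a that are
bijective on X and the identity outside X. Groups act on the right: x g is
written g x, and the group product g h (first g, then h) is the function
h \<circ> g. Conjugation u^g = g^-1 u g is therefore g \<circ> u \<circ> inv g.\<close>

definition cls :: "'a rel \<Rightarrow> 'a set \<Rightarrow> 'a \<Rightarrow> 'a set" where
  "cls r X x = {y \<in> X. (x, y) \<in> r}"

definition SymEq :: "'a set \<Rightarrow> 'a rel \<Rightarrow> ('a \<Rightarrow> 'a) set" where
  "SymEq X r = {g. bij_betw g X X \<and> (\<forall>x. x \<notin> X \<longrightarrow> g x = x) \<and>
      (\<forall>x\<in>X. \<forall>y\<in>X. (x, y) \<in> r \<longleftrightarrow> (g x, g y) \<in> r)}"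

definition induced :: "'a set \<Rightarrow> 'a rel \<Rightarrow> ('a \<Rightarrow> 'a) \<Rightarrow> ('a set \<Rightarrow> 'a set)" where
  "induced X r g = (\<lambda>C. if C \<in> X // r then g ` C else undefined)"

definition inducedGrp :: "'a set \<Rightarrow> 'a rel \<Rightarrow> ('a \<Rightarrow> 'a) set \<Rightarrow> ('a set \<Rightarrow> 'a set) set" where
  "inducedGrp X r U = induced X r ` U"

definition is_subgroup :: "('a \<Rightarrow> 'a) set \<Rightarrow> ('a \<Rightarrow> 'a) set \<Rightarrow> bool" where
  "is_subgroup U S \<longleftrightarrow> U \<subseteq> S \<and> id \<in> U \<and> (\<forall>g\<in>U. \<forall>h\<in>U. h \<circ> g \<in> U) \<and>
      (\<forall>g\<in>U. inv g \<in> U)"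

inductive_set genGroup :: "('a \<Rightarrow> 'a) set \<Rightarrow> ('a \<Rightarrow> 'a) set" for S where
  gen_id: "id \<in> genGroup S"
| gen_mult: "g \<in> S \<Longrightarrow> h \<in> genGroup S \<Longrightarrow> h \<circ> g \<in> genGroup S"
| gen_inv: "g \<in> S \<Longrightarrow> h \<in> genGroup S \<Longrightarrow> h \<circ> inv g \<in> genGroup S"

definition little_proj_group :: "'a set \<Rightarrow> ('a \<Rightarrow> ('a \<Rightarrow> 'a) set) \<Rightarrow> ('a \<Rightarrow> 'a) set" where
  "little_proj_group X U = genGroup (\<Union>x\<in>X. U x)"

definition local_moufang_set ::
  "'a set \<Rightarrow> 'a rel \<Rightarrow> ('a \<Rightarrow> ('a \<Rightarrow> 'a) set) \<Rightarrow> bool" where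
  "local_moufang_set X r U \<longleftrightarrow>
     equiv X r \<and>
     (\<exists>A\<in>X // r. \<exists>B\<in>X // r. \<exists>C\<in>X // r. A \<noteq> B \<and> A \<noteq> C \<and> B \<noteq> C) \<and>
     (\<forall>x\<in>X. is_subgroup (U x) (SymEq X r)) \<and>
     \<comment> \<open>LM0\<close>
     (\<forall>x\<in>X. \<forall>y\<in>X. (x, y) \<in> r \<longrightarrow> inducedGrp X r (U x) = inducedGrp X r (U y)) \<and>
     \<comment> \<open>LM1\<close>
     (\<forall>x\<in>X. (\<forall>u\<in>U x. u x = x) \<and>
        (\<forall>y\<in>X - cls r X x. \<forall>z\<in>X - cls r X x. \<exists>!u. u \<in> U x \<and> u y = z)) \<and>
     \<comment> \<open>LM1'\<close>
     (\<forall>x\<in>X. (\<forall>v\<in>inducedGrp X r (U x). v (cls r X x) = cls r X x) \<and>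
        (\<forall>C\<in>X // r - {cls r X x}. \<forall>D\<in>X // r - {cls r X x}.
           \<exists>!v. v \<in> inducedGrp X r (U x) \<and> v C = D)) \<and>
     \<comment> \<open>LM2\<close>
     (\<forall>x\<in>X. \<forall>g\<in>little_proj_group X U.
        (\<lambda>u. g \<circ> u \<circ> inv g) ` U x = U (g x))"

definition alpha :: "('a \<Rightarrow> ('a \<Rightarrow> 'a) set) \<Rightarrow> 'a \<Rightarrow> 'a \<Rightarrow> 'a \<Rightarrow> ('a \<Rightarrow> 'a)" where
  "alpha U zero infty x = (THE a. a \<in> U infty \<and> a zero = x)"

text \<open>mu_x: the unique element of U_0 alpha_x U_0 (products in right-action order)
interchanging 0 and infinity.\<close>
definition mu :: "('a \<Rightarrow> ('a \<Rightarrow> 'a) set) \<Rightarrow> 'a \<Rightarrow> 'a \<Rightarrow> 'a \<Rightarrow> ('a \<Rightarrow> 'a)" where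
  "mu U zero infty x = (THE m. m \<in> {v \<circ> alpha U zero infty x \<circ> u | u v. u \<in> U zero \<and> v \<in> U zero}
       \<and> m zero = infty \<and> m infty = zero)"

definition units :: "'a set \<Rightarrow> 'a rel \<Rightarrow> 'a \<Rightarrow> 'a \<Rightarrow> 'a set" where
  "units X r zero infty = {x \<in> X. (x, zero) \<notin> r \<and> (x, infty) \<notin> r}"

definition hua :: "'a set \<Rightarrow> 'a rel \<Rightarrow> ('a \<Rightarrow> ('a \<Rightarrow> 'a) set) \<Rightarrow> 'a \<Rightarrow> 'a \<Rightarrow> ('a \<Rightarrow> 'a) set" where
  "hua X r U zero infty = genGroup {mu U zero infty y \<circ> mu U zero infty x | x y.
       x \<in> units X r zero infty \<and> y \<in> units X r zero infty}"

definition Ucirc :: "'a set \<Rightarrow> 'a rel \<Rightarrow> ('a \<Rightarrow> ('a \<Rightarrow> 'a) set) \<Rightarrow> 'a \<Rightarrow> ('a \<Rightarrow> 'a) set" where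
  "Ucirc X r U x = {u \<in> U x. induced X r u = induced X r id}"

end

theory Submission
  imports Defs
begin


lemma SymEq_bij: "g \<in> SymEq X r \<Longrightarrow> bij g"
proof -
  assume g: "g \<in> SymEq X r"
  hence b: "bij_betw g X X" and o: "\<And>x. x \<notin> X \<Longrightarrow> g x = x" by (auto simp: SymEq_def)
  have "inj g"
  proof (rule injI)
    fix a b assume e: "g a = g b"
    show "a = b"
    proof (cases "a \<in> X"; cases "b \<in> X")
      assume "a \<in> X" "b \<in> X" thus ?thesis using e b by (metis bij_betw_imp_inj_on inj_onD)
    next
      assume "a \<in> X" "b \<notin> X" thus ?thesis using e b o by (metis bij_betw_apply)
    next
      assume "a \<notin> X" "b \<in> X" thus ?thesis using e b o by (metis bij_betw_apply)
    next
      assume "a \<notin> X" "b \<notin> X" thus ?thesis using e o by metis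
    qed
  qed
  moreover have "surj g"
  proof -
    { fix y have "y \<in> range g"
      proof (cases "y \<in> X")
        case True thus ?thesis using b by (metis bij_betw_imp_surj_on image_iff rangeI)
      next
        case False thus ?thesis using o by (metis rangeI)
      qed }
    thus ?thesis by auto
  qed
  ultimately show ?thesis by (simp add: bij_def)
qed

lemma gen_comp: "g \<in> genGroup S \<Longrightarrow> k \<in> genGroup S \<Longrightarrow> k \<circ> g \<in> genGroup S"
proof (induction g rule: genGroup.induct)
  case gen_id thus ?case by (simp only: comp_id)
next
  case (gen_mult s h)
  hence "k \<circ> h \<in> genGroup S" by blast
  hence "(k \<circ> h) \<circ> s \<in> genGroup S" by (rule genGroup.gen_mult[OF gen_mult.hyps(1)])
  thus ?case by (simp only: comp_assoc)
next
  case (gen_inv s h)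
  hence "k \<circ> h \<in> genGroup S" by blast
  hence "(k \<circ> h) \<circ> inv s \<in> genGroup S" by (rule genGroup.gen_inv[OF gen_inv.hyps(1)])
  thus ?case by (simp only: comp_assoc)
qed

lemma gen_base: "s \<in> S \<Longrightarrow> s \<in> genGroup S"
  using genGroup.gen_mult[OF _ genGroup.gen_id] by fastforce

lemma gen_base_inv: "s \<in> S \<Longrightarrow> inv s \<in> genGroup S"
  using genGroup.gen_inv[OF _ genGroup.gen_id] by fastforce

lemma gen_bij: assumes "\<forall>s\<in>S. bij s" shows "g \<in> genGroup S \<Longrightarrow> bij g"
  by (induction g rule: genGroup.induct) (use assms in \<open>auto intro!: bij_comp bij_imp_bij_inv simp del: comp_apply simp: bij_id id_def[symmetric]\<close>)

lemma gen_inv_closed: assumes "\<forall>s\<in>S. bij s" shows "g \<in> genGroup S \<Longrightarrow> inv g \<in> genGroup S"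
proof (induction g rule: genGroup.induct)
  case gen_id thus ?case by (simp only: inv_id genGroup.gen_id)
next
  case (gen_mult s h)
  have "bij s" "bij h" using gen_mult assms gen_bij by auto
  hence "inv (h \<circ> s) = inv s \<circ> inv h" by (simp add: o_inv_distrib)
  thus ?case using gen_comp[OF gen_mult.IH gen_base_inv[OF gen_mult.hyps(1)]] by metis
next
  case (gen_inv s h)
  have "bij s" "bij h" using gen_inv assms gen_bij by auto
  hence "inv (h \<circ> inv s) = s \<circ> inv h" by (simp add: o_inv_distrib bij_imp_bij_inv inv_inv_eq)
  thus ?case using gen_comp[OF gen_inv.IH gen_base[OF gen_inv.hyps(1)]] by metis
qed

lemma gen_mono: assumes "\<forall>s\<in>T. bij s" "S \<subseteq> genGroup T"
  shows "g \<in> genGroup S \<Longrightarrow> g \<in> genGroup T"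
proof (induction g rule: genGroup.induct)
  case gen_id thus ?case by (simp only: inv_id genGroup.gen_id)
next
  case (gen_mult s h) thus ?case using assms gen_comp by blast
next
  case (gen_inv s h) thus ?case using assms gen_comp gen_inv_closed by blast
qed

lemma gen_fix: assumes "\<forall>s\<in>S. bij s \<and> s a = a"
  shows "g \<in> genGroup S \<Longrightarrow> g a = a"
proof (induction g rule: genGroup.induct)
  case gen_id thus ?case by simp
next
  case (gen_mult s h) thus ?case using assms by auto
next
  case (gen_inv s h)
  hence "bij s" "s a = a" using assms by auto
  hence "inv s a = a" by (simp add: bij_is_inj inv_f_eq)
  thus ?case using gen_inv by simp
qed




lemma ex1_eq: "\<exists>!x. P x \<Longrightarrow> P a \<Longrightarrow> P b \<Longrightarrow> a = b" by (erule ex1E) blast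

locale LMS =
  fixes X r U zero infty
  assumes lms: "local_moufang_set X r U" and zX: "zero \<in> X" and iX: "infty \<in> X"
    and zi: "(zero, infty) \<notin> r"
begin

abbreviation "G \<equiv> little_proj_group X U"
abbreviation "H \<equiv> hua X r U zero infty"

lemma eqv: "equiv X r" using lms unfolding local_moufang_set_def by (elim conjE) assumption
lemma lmsub: "\<forall>x\<in>X. is_subgroup (U x) (SymEq X r)" using lms unfolding local_moufang_set_def by (elim conjE) assumption
lemma lm1: "\<forall>x\<in>X. (\<forall>u\<in>U x. u x = x) \<and>
        (\<forall>y\<in>X - cls r X x. \<forall>z\<in>X - cls r X x. \<exists>!u. u \<in> U x \<and> u y = z)"
  using lms unfolding local_moufang_set_def by (elim conjE) assumption
lemma lm1': "\<forall>x\<in>X. (\<forall>v\<in>inducedGrp X r (U x). v (cls r X x) = cls r X x) \<and>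
        (\<forall>C\<in>X // r - {cls r X x}. \<forall>D\<in>X // r - {cls r X x}.
           \<exists>!v. v \<in> inducedGrp X r (U x) \<and> v C = D)"
  using lms unfolding local_moufang_set_def by (elim conjE) assumption
lemma lm2: "\<forall>x\<in>X. \<forall>g\<in>little_proj_group X U.
        (\<lambda>u. g \<circ> u \<circ> inv g) ` U x = U (g x)"
  using lms unfolding local_moufang_set_def by (elim conjE) assumption
lemma lm3: "\<exists>A\<in>X // r. \<exists>B\<in>X // r. \<exists>C\<in>X // r. A \<noteq> B \<and> A \<noteq> C \<and> B \<noteq> C"
  using lms unfolding local_moufang_set_def by (elim conjE) assumption
lemma rX: "(a, b) \<in> r \<Longrightarrow> a \<in> X \<and> b \<in> X" using eqv by (auto simp: equiv_def refl_on_def)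
lemma rrefl: "a \<in> X \<Longrightarrow> (a, a) \<in> r" using eqv by (auto simp: equiv_def refl_on_def)
lemma rsym: "(a, b) \<in> r \<Longrightarrow> (b, a) \<in> r" using eqv by (auto simp: equiv_def sym_def)
lemma rtrans: "(a, b) \<in> r \<Longrightarrow> (b, c) \<in> r \<Longrightarrow> (a, c) \<in> r" using eqv by (auto simp: equiv_def trans_def)
lemma iz: "(infty, zero) \<notin> r" using zi rsym by blast

lemma sub: "x \<in> X \<Longrightarrow> is_subgroup (U x) (SymEq X r)" using lmsub by blast
lemma U_Sym: "x \<in> X \<Longrightarrow> f \<in> U x \<Longrightarrow> f \<in> SymEq X r" using sub[of x] unfolding is_subgroup_def by blast
lemma U_bij: "x \<in> X \<Longrightarrow> f \<in> U x \<Longrightarrow> bij f" using U_Sym SymEq_bij by blast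
lemma U_comp: "x \<in> X \<Longrightarrow> f \<in> U x \<Longrightarrow> g \<in> U x \<Longrightarrow> g \<circ> f \<in> U x" using sub by (auto simp: is_subgroup_def)
lemma U_inv: "x \<in> X \<Longrightarrow> f \<in> U x \<Longrightarrow> inv f \<in> U x" using sub by (auto simp: is_subgroup_def)
lemma U_id: "x \<in> X \<Longrightarrow> id \<in> U x" using sub by (auto simp: is_subgroup_def)
lemma U_X: assumes "x \<in> X" "f \<in> U x" "a \<in> X" shows "f a \<in> X"
proof -
  have "bij_betw f X X" using U_Sym[OF assms(1,2)] by (simp add: SymEq_def)
  thus ?thesis using assms(3) by (rule bij_betw_apply)
qed
lemma U_rel: "x \<in> X \<Longrightarrow> f \<in> U x \<Longrightarrow> a \<in> X \<Longrightarrow> b \<in> X \<Longrightarrow> (f a, f b) \<in> r \<longleftrightarrow> (a, b) \<in> r"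
  using U_Sym by (auto simp: SymEq_def)
lemma U_fix: "x \<in> X \<Longrightarrow> f \<in> U x \<Longrightarrow> f x = x" using lm1 by blast
lemma U_tr: "x \<in> X \<Longrightarrow> a \<in> X \<Longrightarrow> b \<in> X \<Longrightarrow> (x, a) \<notin> r \<Longrightarrow> (x, b) \<notin> r \<Longrightarrow> \<exists>!u. u \<in> U x \<and> u a = b"
proof -
  assume h: "x \<in> X" "a \<in> X" "b \<in> X" "(x, a) \<notin> r" "(x, b) \<notin> r"
  have A: "a \<in> X - cls r X x" and B: "b \<in> X - cls r X x" using h by (auto simp: cls_def)
  show ?thesis using bspec[OF bspec[OF conjunct2[OF bspec[OF lm1 h(1)]] A] B] .
qed
lemma U_inv_app: "x \<in> X \<Longrightarrow> f \<in> U x \<Longrightarrow> inv f (f a) = a" using U_bij by (simp add: bij_is_inj)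
lemma U_app_inv: "x \<in> X \<Longrightarrow> f \<in> U x \<Longrightarrow> f (inv f a) = a" using U_bij by (simp add: bij_is_surj surj_f_inv_f)

lemma U_uniq: assumes "x \<in> X" "a \<in> X" "(x, a) \<notin> r" "f \<in> U x" "g \<in> U x" "f a = g a"
  shows "f = g"
proof -
  have fa: "f a \<in> X" using assms U_X by blast
  have "(x, f a) \<notin> r" using U_rel[OF assms(1,4,1,2)] U_fix[OF assms(1,4)] assms(3) by simp
  hence "\<exists>!u. u \<in> U x \<and> u a = f a" using U_tr[OF assms(1,2) fa assms(3)] by simp
  thus ?thesis by (rule ex1_eq) (use assms in simp)+
qed

lemma U_ex: assumes "x \<in> X" "a \<in> X" "b \<in> X" "(x, a) \<notin> r" "(x, b) \<notin> r"
  shows "\<exists>f\<in>U x. f a = b"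
proof -
  have "\<exists>!u. u \<in> U x \<and> u a = b" using U_tr[OF assms] .
  thus ?thesis by blast
qed

lemma U_nrel: assumes "x \<in> X" "f \<in> U x" "a \<in> X" "(x, a) \<notin> r" shows "(x, f a) \<notin> r"
  using U_rel[OF assms(1,2,1,3)] U_fix[OF assms(1,2)] assms(4) by simp

lemma cls_eq: "a \<in> X \<Longrightarrow> cls r X a = r `` {a}" using rX by (auto simp: cls_def)

lemma Sym_img: assumes "f \<in> SymEq X r" "a \<in> X" shows "f ` (r `` {a}) = r `` {f a}"
proof
  have b: "bij_betw f X X" and rel: "\<And>x y. x \<in> X \<Longrightarrow> y \<in> X \<Longrightarrow> (x, y) \<in> r \<longleftrightarrow> (f x, f y) \<in> r"
    using assms by (auto simp: SymEq_def)
  show "f ` (r `` {a}) \<subseteq> r `` {f a}"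
  proof
    fix c assume "c \<in> f ` (r `` {a})"
    then obtain b' where b': "(a, b') \<in> r" "c = f b'" by blast
    hence "(f a, f b') \<in> r" using rel[of a b'] rX[OF b'(1)] by blast
    thus "c \<in> r `` {f a}" using b' by simp
  qed
  show "r `` {f a} \<subseteq> f ` (r `` {a})"
  proof
    fix c assume "c \<in> r `` {f a}"
    hence c: "(f a, c) \<in> r" "c \<in> X" using rX by auto
    then obtain b' where "b' \<in> X" "f b' = c" using b by (metis bij_betw_imp_surj_on imageE)
    moreover have "(a, b') \<in> r" using rel[of a b'] c assms(2) calculation by simp
    ultimately show "c \<in> f ` (r `` {a})" by blast
  qed
qed

lemma induced_cls: "f \<in> SymEq X r \<Longrightarrow> a \<in> X \<Longrightarrow> induced X r f (r `` {a}) = r `` {f a}"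
  using Sym_img by (simp add: induced_def quotientI)

lemma id_Sym: "id \<in> SymEq X r" using U_id U_Sym zX by blast

lemma Ucirc_iff: assumes "x \<in> X"
  shows "u \<in> Ucirc X r U x \<longleftrightarrow> u \<in> U x \<and> (\<forall>a\<in>X. (u a, a) \<in> r)"
proof
  assume u: "u \<in> Ucirc X r U x"
  hence uU: "u \<in> U x" and e: "induced X r u = induced X r id" by (auto simp: Ucirc_def)
  { fix a assume a: "a \<in> X"
    have "r `` {u a} = r `` {a}" using e induced_cls[OF U_Sym[OF assms uU] a] induced_cls[OF id_Sym a] by simp
    hence "(u a, a) \<in> r" using eqv a U_X[OF assms uU a] by (simp add: eq_equiv_class_iff) }
  thus "u \<in> U x \<and> (\<forall>a\<in>X. (u a, a) \<in> r)" using uU by blast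
next
  assume h: "u \<in> U x \<and> (\<forall>a\<in>X. (u a, a) \<in> r)"
  have "induced X r u = induced X r id"
  proof
    fix C show "induced X r u C = induced X r id C"
    proof (cases "C \<in> X // r")
      case True
      then obtain a where a: "a \<in> X" "C = r `` {a}" by (auto elim: quotientE)
      have "r `` {u a} = r `` {a}" using h a eqv U_X[OF assms conjunct1[OF h] a(1)] by (simp add: eq_equiv_class_iff)
      thus ?thesis using a induced_cls[OF U_Sym[OF assms conjunct1[OF h]] a(1)] induced_cls[OF id_Sym a(1)] h by simp
    next
      case False thus ?thesis by (simp add: induced_def)
    qed
  qed
  thus "u \<in> Ucirc X r U x" using h by (simp add: Ucirc_def)
qed

lemma triv: assumes "x \<in> X" "y \<in> X" "(x, y) \<notin> r" "f \<in> U x" "(f y, y) \<in> r"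
  shows "\<forall>a\<in>X. (f a, a) \<in> r"
proof -
  let ?C = "r `` {y}"
  have Cq: "?C \<in> X // r" using assms(2) by (simp add: quotientI)
  have "(y, x) \<notin> r" using assms(3) rsym by blast
  hence "?C \<noteq> r `` {x}" using eqv assms by (simp add: eq_equiv_class_iff)
  hence C: "?C \<in> X // r - {cls r X x}" using Cq cls_eq[OF assms(1)] by simp
  have E: "\<exists>!v. v \<in> inducedGrp X r (U x) \<and> v ?C = ?C"
    using bspec[OF bspec[OF conjunct2[OF bspec[OF lm1' assms(1)]] C] C] .
  have f1: "induced X r f \<in> inducedGrp X r (U x)" using assms by (simp add: inducedGrp_def)
  have f2: "induced X r id \<in> inducedGrp X r (U x)" using U_id assms by (simp add: inducedGrp_def)
  have f3: "induced X r f ?C = ?C"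
    using induced_cls[OF U_Sym[OF assms(1,4)] assms(2)] eqv assms U_X by (simp add: eq_equiv_class_iff)
  have f4: "induced X r id ?C = ?C" using induced_cls[OF id_Sym assms(2)] by simp
  have "induced X r f = induced X r id" by (rule ex1_eq[where P="\<lambda>v. v \<in> inducedGrp X r (U x) \<and> v ?C = ?C", OF E conjI[OF f1 f3] conjI[OF f2 f4]])
  hence "f \<in> Ucirc X r U x" using assms by (simp add: Ucirc_def)
  thus ?thesis using Ucirc_iff assms by blast
qed

end



lemma bij_iL: "bij f \<Longrightarrow> inv f (f a) = a" by (simp add: bij_is_inj)
lemma bij_iR: "bij f \<Longrightarrow> f (inv f a) = a" by (simp add: bij_is_surj surj_f_inv_f)

context LMS begin

lemma G_gens: "\<forall>s\<in>(\<Union>x\<in>X. U x). bij s" using U_bij by blast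
lemma U_G: "x \<in> X \<Longrightarrow> f \<in> U x \<Longrightarrow> f \<in> G"
  unfolding little_proj_group_def by (rule gen_base) blast
lemma G_comp: "f \<in> G \<Longrightarrow> g \<in> G \<Longrightarrow> g \<circ> f \<in> G"
  unfolding little_proj_group_def by (rule gen_comp)
lemma G_inv: "f \<in> G \<Longrightarrow> inv f \<in> G"
  unfolding little_proj_group_def by (rule gen_inv_closed[OF G_gens])
lemma G_bij: "f \<in> G \<Longrightarrow> bij f"
  unfolding little_proj_group_def by (rule gen_bij[OF G_gens])
lemma conj: assumes "g \<in> G" "x \<in> X" "f \<in> U x" shows "g \<circ> f \<circ> inv g \<in> U (g x)"
proof -
  have "(\<lambda>u. g \<circ> u \<circ> inv g) ` U x = U (g x)" using bspec[OF bspec[OF lm2 assms(2)] assms(1)] .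
  thus ?thesis using assms(3) by blast
qed

lemma alpha_eq: assumes "a \<in> U infty" "a zero = x" shows "alpha U zero infty x = a"
  unfolding alpha_def
proof (rule the_equality)
  show "a \<in> U infty \<and> a zero = x" using assms by simp
  fix b assume b: "b \<in> U infty \<and> b zero = x"
  show "b = a" by (rule U_uniq[OF iX zX iz conjunct1[OF b] assms(1)]) (simp add: b assms(2))
qed

lemma alpha: assumes "x \<in> X" "(x, infty) \<notin> r"
  shows "alpha U zero infty x \<in> U infty \<and> alpha U zero infty x zero = x"
proof -
  have "(infty, x) \<notin> r" using assms rsym by blast
  then obtain f where "f \<in> U infty" "f zero = x" using U_ex[OF iX zX assms(1) iz] by blast
  thus ?thesis using alpha_eq by simp
qed

lemma units_iff: "x \<in> units X r zero infty \<longleftrightarrow> x \<in> X \<and> (x, zero) \<notin> r \<and> (x, infty) \<notin> r"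
  by (simp add: units_def)

lemma mu: assumes "x \<in> units X r zero infty"
  shows "\<exists>u v. u \<in> U zero \<and> v \<in> U zero \<and> mu U zero infty x = v \<circ> alpha U zero infty x \<circ> u
     \<and> u infty = inv (alpha U zero infty x) zero \<and> mu U zero infty x zero = infty
     \<and> mu U zero infty x infty = zero"
proof -
  define a where "a = alpha U zero infty x"
  have x: "x \<in> X" "(x, zero) \<notin> r" "(x, infty) \<notin> r" using assms units_iff by auto
  have a: "a \<in> U infty" "a zero = x" using alpha[OF x(1,3)] a_def by auto
  define p where "p = inv a zero"
  have pX: "p \<in> X" using U_X[OF iX U_inv[OF iX a(1)] zX] p_def by simp
  have ap: "a p = zero" using U_app_inv[OF iX a(1)] p_def by simp
  have p0: "(zero, p) \<notin> r"
  proof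
    assume "(zero, p) \<in> r"
    hence "(a zero, a p) \<in> r" using U_rel[OF iX a(1) zX pX] by simp
    thus False using a ap x rsym by auto
  qed
  obtain u where u: "u \<in> U zero" "u infty = p" using U_ex[OF zX iX pX zi p0] by blast
  have x0: "(zero, x) \<notin> r" using x rsym by blast
  obtain v where v: "v \<in> U zero" "v x = infty" using U_ex[OF zX x(1) iX x0 zi] by blast
  define m where "m = v \<circ> a \<circ> u"
  have m0: "m zero = infty" using m_def U_fix[OF zX u(1)] a v by simp
  have mi: "m infty = zero" using m_def u ap U_fix[OF zX v(1)] by simp
  let ?P = "\<lambda>m. m \<in> {v \<circ> alpha U zero infty x \<circ> u | u v. u \<in> U zero \<and> v \<in> U zero}
       \<and> m zero = infty \<and> m infty = zero"
  have "mu U zero infty x = m"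
    unfolding mu_def
  proof (rule the_equality)
    have "m = v \<circ> alpha U zero infty x \<circ> u" using m_def a_def by simp
    thus "?P m" using u v m0 mi by blast
    fix m' assume "?P m'"
    then obtain u' v' where uv': "u' \<in> U zero" "v' \<in> U zero" "m' = v' \<circ> a \<circ> u'"
      "m' zero = infty" "m' infty = zero" using a_def by blast
    have "v' x = infty" using uv' U_fix[OF zX uv'(1)] a by simp
    hence vv: "v' = v" using U_uniq[OF zX x(1) x0 uv'(2) v(1)] v by simp
    have "v (a (u' infty)) = v zero" using uv' vv U_fix[OF zX v(1)] by simp
    hence "inv v (v (a (u' infty))) = inv v (v zero)" by simp
    hence "a (u' infty) = zero" using bij_iL[OF U_bij[OF zX v(1)]] by simp
    hence "inv a (a (u' infty)) = p" using p_def by simp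
    hence "u' infty = p" using bij_iL[OF U_bij[OF iX a(1)]] by simp
    hence "u' = u" using U_uniq[OF zX iX zi uv'(1) u(1)] u by simp
    thus "m' = m" using vv uv' m_def by simp
  qed
  thus ?thesis using u v m_def a_def p_def m0 mi by blast
qed

lemma mu_G: assumes "x \<in> units X r zero infty" shows "mu U zero infty x \<in> G"
proof -
  obtain u v where uv: "u \<in> U zero" "v \<in> U zero" "mu U zero infty x = v \<circ> alpha U zero infty x \<circ> u"
    using mu[OF assms] by blast
  have "alpha U zero infty x \<in> U infty" using alpha assms units_iff by blast
  hence "alpha U zero infty x \<in> G" by (rule U_G[OF iX])
  moreover have "u \<in> G" "v \<in> G" using uv U_G[OF zX] by auto
  ultimately have "v \<circ> alpha U zero infty x \<circ> u \<in> G" by (intro G_comp)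
  thus ?thesis using uv by simp
qed

lemma mu_sw: assumes "x \<in> units X r zero infty"
  shows "mu U zero infty x zero = infty" "mu U zero infty x infty = zero"
  using mu[OF assms] by auto

abbreviation "HS \<equiv> {mu U zero infty y \<circ> mu U zero infty x | x y.
       x \<in> units X r zero infty \<and> y \<in> units X r zero infty}"

lemma HS_G: "HS \<subseteq> G"
proof
  fix s assume "s \<in> HS"
  then obtain x y where "x \<in> units X r zero infty" "y \<in> units X r zero infty"
    "s = mu U zero infty y \<circ> mu U zero infty x" by blast
  thus "s \<in> G" using mu_G G_comp by simp
qed
lemma H_G: "h \<in> H \<Longrightarrow> h \<in> G"
  unfolding hua_def using gen_mono[OF G_gens] HS_G unfolding little_proj_group_def by blast
lemma H_fix: "h \<in> H \<Longrightarrow> h infty = infty"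
proof -
  have "\<forall>s\<in>HS. bij s \<and> s infty = infty" using HS_G G_bij mu_sw by auto
  thus "h \<in> H \<Longrightarrow> h infty = infty" unfolding hua_def by (rule gen_fix)
qed
lemma H_comp: "f \<in> H \<Longrightarrow> g \<in> H \<Longrightarrow> g \<circ> f \<in> H" unfolding hua_def by (rule gen_comp)
lemma H_gen: "x \<in> units X r zero infty \<Longrightarrow> y \<in> units X r zero infty
   \<Longrightarrow> mu U zero infty y \<circ> mu U zero infty x \<in> H"
  unfolding hua_def by (rule gen_base) blast

end



context LMS begin

lemma F1: assumes d: "d \<in> U zero" and dn: "(d infty, infty) \<notin> r"
  shows "\<exists>b a' x. b \<in> U infty \<and> a' \<in> U infty \<and> x \<in> units X r zero infty
     \<and> d = a' \<circ> mu U zero infty x \<circ> b"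
proof -
  define w where "w = d infty"
  have wX: "w \<in> X" using U_X[OF zX d iX] w_def by simp
  have w0: "(zero, w) \<notin> r" using U_nrel[OF zX d iX zi] w_def by simp
  have iw: "(infty, w) \<notin> r" using dn w_def rsym by blast
  obtain aw where aw: "aw \<in> U infty" "aw zero = w" using U_ex[OF iX zX wX iz iw] by blast
  define x where "x = inv aw zero"
  have iaw: "inv aw \<in> U infty" using U_inv[OF iX aw(1)] .
  have xX: "x \<in> X" using U_X[OF iX iaw zX] x_def by simp
  have ix: "(infty, x) \<notin> r" using U_nrel[OF iX iaw zX iz] x_def by simp
  have awx: "aw x = zero" using U_app_inv[OF iX aw(1)] x_def by simp
  have x0: "(x, zero) \<notin> r"
  proof
    assume "(x, zero) \<in> r"
    hence "(aw x, aw zero) \<in> r" using U_rel[OF iX aw(1) xX zX] by simp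
    hence "(zero, w) \<in> r" using awx aw by simp
    thus False using w0 by simp
  qed
  have xu: "x \<in> units X r zero infty" using xX x0 ix rsym units_iff by blast
  have al: "alpha U zero infty x = inv aw" using alpha_eq[OF iaw] x_def by simp
  have baw: "bij aw" using U_bij[OF iX aw(1)] .
  obtain u v where uv: "u \<in> U zero" "v \<in> U zero" "mu U zero infty x = v \<circ> inv aw \<circ> u"
    "u infty = inv (inv aw) zero" using mu[OF xu] al by auto
  have "u infty = w" using uv(4) baw aw by (simp add: inv_inv_eq)
  hence ud: "u = d" using U_uniq[OF zX iX zi uv(1) d] w_def by simp
  define m where "m = mu U zero infty x"
  have mG: "m \<in> G" using mu_G[OF xu] m_def by simp
  have bm: "bij m" using G_bij[OF mG] .
  have bv: "bij v" using U_bij[OF zX uv(2)] .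
  have m0: "inv m zero = infty" using mu_sw[OF xu] m_def bm by (simp add: bij_is_inj inv_f_eq)
  define b where "b = inv m \<circ> inv v \<circ> m"
  have "inv m \<circ> inv v \<circ> inv (inv m) \<in> U (inv m zero)"
    by (rule conj[OF G_inv[OF mG] zX U_inv[OF zX uv(2)]])
  hence bU: "b \<in> U infty" using b_def m0 bm by (simp add: inv_inv_eq)
  have "d = aw \<circ> m \<circ> b"
  proof
    fix t
    have "(aw \<circ> m \<circ> b) t = aw (inv v (m t))" using b_def bij_iR[OF bm] by simp
    also have "\<dots> = d t" using uv(3) ud m_def bij_iL[OF bv] bij_iL[OF bij_imp_bij_inv[OF baw]] baw
      by (simp add: inv_inv_eq)
    finally show "d t = (aw \<circ> m \<circ> b) t" by simp
  qed
  thus ?thesis using bU aw(1) xu m_def by blast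
qed

lemma lemA: assumes u: "u \<in> Ucirc X r U zero" and v: "v \<in> U infty" and v0: "(v zero, zero) \<notin> r"
  shows "\<exists>a h c. a \<in> U infty \<and> h \<in> H \<and> c \<in> U zero \<and> v \<circ> u = c \<circ> h \<circ> a"
proof -
  have uU: "u \<in> U zero" and ur: "\<forall>t\<in>X. (u t, t) \<in> r" using u Ucirc_iff[OF zX] by auto
  define y where "y = v zero"
  have yX: "y \<in> X" using U_X[OF iX v zX] y_def by simp
  have iy: "(infty, y) \<notin> r" using U_nrel[OF iX v zX iz] y_def by simp
  have yu: "y \<in> units X r zero infty" using yX v0 iy rsym y_def units_iff by blast
  have al: "alpha U zero infty y = v" using alpha_eq[OF v] y_def by simp
  obtain g1 g2 where g: "g1 \<in> U zero" "g2 \<in> U zero" "mu U zero infty y = g2 \<circ> v \<circ> g1"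
    "g1 infty = inv v zero" using mu[OF yu] al by auto
  have bg1: "bij g1" "bij g2" using U_bij[OF zX] g by auto
  define d where "d = inv g1 \<circ> u"
  have dU: "d \<in> U zero" using U_comp[OF zX uU U_inv[OF zX g(1)]] d_def by simp
  have dn: "(d infty, infty) \<notin> r"
  proof
    assume a: "(d infty, infty) \<in> r"
    define p where "p = u infty"
    have pX: "p \<in> X" using U_X[OF zX uU iX] p_def by simp
    have pi: "(p, infty) \<in> r" using ur iX p_def by simp
    have ipX: "inv g1 p \<in> X" using U_X[OF zX U_inv[OF zX g(1)] pX] .
    have "(inv g1 p, infty) \<in> r" using a d_def p_def by simp
    hence "(g1 (inv g1 p), g1 infty) \<in> r" using U_rel[OF zX g(1) ipX iX] by simp
    hence "(p, inv v zero) \<in> r" using bij_iR[OF bg1(1)] g(4) by simp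
    hence q: "(infty, inv v zero) \<in> r" using pi rsym rtrans by blast
    have ivX: "inv v zero \<in> X" using U_X[OF iX U_inv[OF iX v] zX] .
    have "(v infty, v (inv v zero)) \<in> r" using U_rel[OF iX v iX ivX] q by simp
    hence "(infty, zero) \<in> r" using U_fix[OF iX v] U_app_inv[OF iX v] by simp
    thus False using iz by simp
  qed
  obtain b a' x where F: "b \<in> U infty" "a' \<in> U infty" "x \<in> units X r zero infty"
     "d = a' \<circ> mu U zero infty x \<circ> b" using F1[OF dU dn] by blast
  define my where "my = mu U zero infty y"
  have myG: "my \<in> G" using mu_G[OF yu] my_def by simp
  have bmy: "bij my" using G_bij[OF myG] .
  have "my \<circ> a' \<circ> inv my \<in> U (my infty)" by (rule conj[OF myG iX F(2)])
  hence cj: "my \<circ> a' \<circ> inv my \<in> U zero" using mu_sw[OF yu] my_def by simp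
  define c where "c = inv g2 \<circ> (my \<circ> a' \<circ> inv my)"
  have cU: "c \<in> U zero" using U_comp[OF zX cj U_inv[OF zX g(2)]] c_def by simp
  define h where "h = my \<circ> mu U zero infty x"
  have hH: "h \<in> H" using H_gen[OF F(3) yu] h_def my_def by simp
  have "v \<circ> u = c \<circ> h \<circ> b"
  proof
    fix t
    have "(c \<circ> h \<circ> b) t = inv g2 (my (a' (mu U zero infty x (b t))))"
      using c_def h_def bij_iL[OF bmy] by simp
    also have "\<dots> = inv g2 (my (d t))" using F(4) by simp
    also have "\<dots> = v (g1 (d t))" using my_def g(3) bij_iL[OF bg1(2)] by simp
    also have "\<dots> = v (u t)" using d_def bij_iR[OF bg1(1)] by simp
    finally show "(v \<circ> u) t = (c \<circ> h \<circ> b) t" by simp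
  qed
  thus ?thesis using F(1) hH cU by blast
qed

lemma closure: assumes u: "u \<in> Ucirc X r U zero" and v: "v \<in> U infty" and c: "c \<in> U zero"
  and h: "h infty = infty" and a: "a \<in> U infty" and e: "v \<circ> u = c \<circ> h \<circ> a"
  shows "c \<in> Ucirc X r U zero"
proof -
  have uU: "u \<in> U zero" and ur: "\<forall>t\<in>X. (u t, t) \<in> r" using u Ucirc_iff[OF zX] by auto
  have "c infty = v (u infty)" using fun_cong[OF e, of infty] h U_fix[OF iX a] by simp
  moreover have "(v (u infty), v infty) \<in> r"
    using U_rel[OF iX v U_X[OF zX uU iX] iX] ur iX by simp
  ultimately have "(c infty, infty) \<in> r" using U_fix[OF iX v] by simp
  hence "\<forall>t\<in>X. (c t, t) \<in> r" using triv[OF zX iX zi c] by simp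
  thus ?thesis using Ucirc_iff[OF zX] c by simp
qed

lemma unit_ex: "\<exists>z. z \<in> X \<and> (z, zero) \<notin> r \<and> (z, infty) \<notin> r"
proof (rule ccontr)
  assume n: "\<not> ?thesis"
  have "\<forall>C\<in>X // r. C = r `` {zero} \<or> C = r `` {infty}"
  proof
    fix C assume "C \<in> X // r"
    then obtain z where z: "z \<in> X" "C = r `` {z}" by (auto elim: quotientE)
    hence "(z, zero) \<in> r \<or> (z, infty) \<in> r" using n by blast
    thus "C = r `` {zero} \<or> C = r `` {infty}"
    proof
      assume "(z, zero) \<in> r" thus ?thesis using z equiv_class_eq[OF eqv] by simp
    next
      assume "(z, infty) \<in> r" thus ?thesis using z equiv_class_eq[OF eqv] by simp
    qed
  qed
  moreover obtain A B C where abc: "A \<in> X // r" "B \<in> X // r" "C \<in> X // r" and ne: "A \<noteq> B" "A \<noteq> C" "B \<noteq> C"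
    using lm3 by blast
  ultimately have "A = r `` {zero} \<or> A = r `` {infty}" "B = r `` {zero} \<or> B = r `` {infty}"
     "C = r `` {zero} \<or> C = r `` {infty}" by auto
  thus False using ne by (elim disjE) simp_all
qed

lemma main: assumes u: "u \<in> Ucirc X r U zero" and v: "v \<in> U infty"
  shows "\<exists>a h c. a \<in> U infty \<and> h \<in> H \<and> c \<in> Ucirc X r U zero \<and> v \<circ> u = c \<circ> h \<circ> a"
proof (cases "(v zero, zero) \<in> r")
  case False
  then obtain a h c where A: "a \<in> U infty" "h \<in> H" "c \<in> U zero" "v \<circ> u = c \<circ> h \<circ> a"
    using lemA[OF u v] by blast
  have "c \<in> Ucirc X r U zero" using closure[OF u v A(3) H_fix[OF A(2)] A(1,4)] .
  thus ?thesis using A by blast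
next
  case True
  have vr: "\<forall>t\<in>X. (v t, t) \<in> r" using triv[OF iX zX iz v True] .
  obtain z where z: "z \<in> X" "(z, zero) \<notin> r" "(z, infty) \<notin> r" using unit_ex by blast
  have iz': "(infty, z) \<notin> r" using z rsym by blast
  obtain az where az: "az \<in> U infty" "az zero = z" using U_ex[OF iX zX z(1) iz iz'] by blast
  have baz: "bij az" using U_bij[OF iX az(1)] .
  define w where "w = v \<circ> inv az"
  have wU: "w \<in> U infty" using U_comp[OF iX U_inv[OF iX az(1)] v] w_def by simp
  have vw: "v = w \<circ> az" using w_def baz by (simp add: fun_eq_iff bij_iL)
  obtain a h c where A: "a \<in> U infty" "h \<in> H" "c \<in> U zero" "az \<circ> u = c \<circ> h \<circ> a"
    using lemA[OF u az(1)] az(2) z(2) by auto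
  have cc: "c \<in> Ucirc X r U zero" using closure[OF u az(1) A(3) H_fix[OF A(2)] A(1,4)] .
  define p where "p = inv az zero"
  have pX: "p \<in> X" using U_X[OF iX U_inv[OF iX az(1)] zX] p_def by simp
  have p0: "(p, zero) \<notin> r"
  proof
    assume "(p, zero) \<in> r"
    hence "(az p, az zero) \<in> r" using U_rel[OF iX az(1) pX zX] by simp
    hence "(zero, z) \<in> r" using az U_app_inv[OF iX az(1)] p_def by simp
    thus False using z rsym by blast
  qed
  have w0: "(w zero, zero) \<notin> r"
  proof
    assume "(w zero, zero) \<in> r"
    hence "(v p, zero) \<in> r" using w_def p_def by simp
    moreover have "(p, v p) \<in> r" using vr pX rsym by blast
    ultimately show False using p0 rtrans by blast
  qed
  obtain a' h' c' where B: "a' \<in> U infty" "h' \<in> H" "c' \<in> U zero" "w \<circ> c = c' \<circ> h' \<circ> a'"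
    using lemA[OF cc wU w0] by blast
  have hG: "h \<in> G" using H_G[OF A(2)] .
  have bh: "bij h" using G_bij[OF hG] .
  have hi: "inv h infty = infty" using H_fix[OF A(2)] bh by (simp add: bij_is_inj inv_f_eq)
  have "inv h \<circ> a' \<circ> inv (inv h) \<in> U (inv h infty)" by (rule conj[OF G_inv[OF hG] iX B(1)])
  hence k: "inv h \<circ> a' \<circ> h \<in> U infty" using hi bh by (simp add: inv_inv_eq)
  define a2 where "a2 = (inv h \<circ> a' \<circ> h) \<circ> a"
  have a2U: "a2 \<in> U infty" using U_comp[OF iX A(1) k] a2_def by simp
  have hh: "h' \<circ> h \<in> H" using H_comp[OF A(2) B(2)] .
  have "v \<circ> u = c' \<circ> (h' \<circ> h) \<circ> a2"
  proof
    fix t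
    have "(v \<circ> u) t = w (az (u t))" using vw by simp
    also have "\<dots> = w (c (h (a t)))" using fun_cong[OF A(4), of t] by simp
    also have "\<dots> = c' (h' (a' (h (a t))))" using fun_cong[OF B(4), of "h (a t)"] by simp
    also have "\<dots> = (c' \<circ> (h' \<circ> h) \<circ> a2) t" using a2_def bij_iR[OF bh] by simp
    finally show "(v \<circ> u) t = (c' \<circ> (h' \<circ> h) \<circ> a2) t" .
  qed
  moreover have "c' \<in> Ucirc X r U zero"
    using closure[OF u v B(3) _ a2U calculation] H_fix[OF hh] by simp
  ultimately show ?thesis using a2U hh by blast
qed

end

theorem mainTheorem5:
  assumes "local_moufang_set X r U"
    and "zero \<in> X" and "infty \<in> X" and "(zero, infty) \<notin> r"
  shows "{v \<circ> u | u v. u \<in> Ucirc X r U zero \<and> v \<in> U infty}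
         \<subseteq> {c \<circ> h \<circ> a | a h c. a \<in> U infty \<and> h \<in> hua X r U zero infty \<and> c \<in> Ucirc X r U zero}"
proof -
  interpret L: LMS X r U zero infty using assms by (unfold_locales) auto
  show ?thesis using L.main by blast
qed


end
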